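(* Let $(\Omega,\mathcal{F},\mathbb{P})$ be a probability space, $k$ a positive integer, $\mathcal{S}$ a $k$-semiring on $\Omega$ with $\mathcal{S}\subseteq\mathcal{F}$, and $f\in L_1(\Omega,\mathcal{F},\mathbb{P})$. Then: (a) $\|f\|_{\mathcal{S}}\le\|f\|_{L_1}$. (b) If $\mathcal{B}$ is a $\sigma$-algebra on $\Omega$ with $\mathcal{B}\subseteq\mathcal{S}$, then $\|\mathbb{E}(f\mid\mathcal{B})\|_{\mathcal{S}}\le\|f\|_{\mathcal{S}}$. (c) If $\mathcal{S}$ is a $\sigma$-algebra, then $\|f\|_{\mathcal{S}}\le\|\mathbb{E}(f\mid\mathcal{S})\|_{L_1}\le 2\|f\|_{\mathcal{S}}$.
   Context: A collection $\mathcal{S}$ of subsets of a nonempty set $\Omega$ is a $k$-semiring on $\Omega$ if: $\emptyset,\Omega\in\mathcal{S}$; $S\cap T\in\mathcal{S}$ for $S,T\in\mathcal{S}$; for $S,T\in\mathcal{S}$ there exist $\ell\in\{1,\dots,k\}$ and pairwise disjoint $R_1,\dots,R_\ell\in\mathcal{S}$ with $S\setminus T=R_1\cup\dots\cup R_\ell$. The $\mathcal{S}$-uniformity norm is $\|f\|_{\mathcal{S}}=\sup\{|\int_S f\,d\mathbb{P}|:S\in\mathcal{S}\}$. *)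

theory Defs
  imports "HOL-Probability.Probability"
begin

definition k_semiring :: "'a set \<Rightarrow> nat \<Rightarrow> 'a set set \<Rightarrow> bool" where
  "k_semiring \<Omega> k \<S> \<longleftrightarrow>
     \<S> \<subseteq> Pow \<Omega> \<and> {} \<in> \<S> \<and> \<Omega> \<in> \<S> \<and>
     (\<forall>S\<in>\<S>. \<forall>T\<in>\<S>. S \<inter> T \<in> \<S>) \<and>
     (\<forall>S\<in>\<S>. \<forall>T\<in>\<S>. \<exists>l\<in>{1..k}. \<exists>R :: nat \<Rightarrow> 'a set.
        (\<forall>i<l. R i \<in> \<S>) \<and> disjoint_family_on R {..<l} \<and> S - T = (\<Union>i<l. R i))"

definition S_norm :: "'a measure \<Rightarrow> 'a set set \<Rightarrow> ('a \<Rightarrow> real) \<Rightarrow> real" where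
  "S_norm M \<S> f = (SUP S\<in>\<S>. \<bar>set_lebesgue_integral M S f\<bar>)"

definition L1_norm :: "'a measure \<Rightarrow> ('a \<Rightarrow> real) \<Rightarrow> real" where
  "L1_norm M f = (\<integral>x. \<bar>f x\<bar> \<partial>M)"

end

theory Submission
  imports Defs
begin


lemma sfs:
  assumes "prob_space M" "sigma_algebra (space M) B" "B \<subseteq> sets M"
  shows "sigma_finite_subalgebra M (sigma (space M) B)" "sets (sigma (space M) B) = B"
proof -
  show sB: "sets (sigma (space M) B) = B" using assms(2) by (simp add: sigma_algebra.sets_measure_of_eq)
  interpret prob_space M by fact
  have "subalgebra M (sigma (space M) B)" unfolding subalgebra_def using sB assms(3) by (simp add: space_measure_of_conv)
  then interpret finite_measure_subalgebra M "sigma (space M) B"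
    by unfold_locales
  show "sigma_finite_subalgebra M (sigma (space M) B)" by unfold_locales
qed

lemma abs_setint_le:
  assumes "integrable M f" "T \<in> sets M"
  shows "\<bar>set_lebesgue_integral M T f\<bar> \<le> L1_norm M f"
proof -
  have "\<bar>set_lebesgue_integral M T f\<bar> \<le> (\<integral>x. \<bar>indicator T x *\<^sub>R f x\<bar> \<partial>M)"
    unfolding set_lebesgue_integral_def by (rule integral_abs_bound)
  also have "\<dots> \<le> (\<integral>x. \<bar>f x\<bar> \<partial>M)"
    apply (rule integral_mono)
    using assms integrable_mult_indicator[OF assms(2) assms(1)]
    by (auto simp: indicator_def)
  finally show ?thesis unfolding L1_norm_def .
qed

lemma Snorm_bdd:
  fixes f :: "'a \<Rightarrow> real"
  assumes "integrable M f" "\<S> \<subseteq> sets M"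
  shows "bdd_above ((\<lambda>S. \<bar>set_lebesgue_integral M S f\<bar>) ` \<S>)"
  using abs_setint_le[OF assms(1)] assms(2) by (auto intro!: bdd_aboveI2)

lemma Snorm_ge:
  fixes f :: "'a \<Rightarrow> real"
  assumes "integrable M f" "\<S> \<subseteq> sets M" "S \<in> \<S>"
  shows "\<bar>set_lebesgue_integral M S f\<bar> \<le> S_norm M \<S> f"
  unfolding S_norm_def using Snorm_bdd[OF assms(1,2)] assms(3) by (rule cSUP_upper2) simp

lemma Snorm_le:
  fixes f :: "'a \<Rightarrow> real"
  assumes "\<S> \<noteq> {}" "\<And>S. S \<in> \<S> \<Longrightarrow> \<bar>set_lebesgue_integral M S f\<bar> \<le> c"
  shows "S_norm M \<S> f \<le> c"
  unfolding S_norm_def using assms by (rule cSUP_least)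


lemma partb:
  assumes "prob_space M" "sigma_algebra (space M) B" "B \<subseteq> \<S>" "\<S> \<subseteq> sets M"
    "integrable M f" "S \<in> sets M"
  shows "\<bar>set_lebesgue_integral M S (real_cond_exp M (sigma (space M) B) f)\<bar> \<le> S_norm M \<S> f"
proof -
  let ?F = "sigma (space M) B"
  let ?g = "real_cond_exp M ?F f"
  have BM: "B \<subseteq> sets M" using assms by auto
  interpret sigma_finite_subalgebra M ?F using sfs[OF assms(1,2) BM] by simp
  have sB: "sets ?F = B" using sfs[OF assms(1,2) BM] by simp
  have gF: "?g \<in> borel_measurable ?F" by (rule borel_measurable_cond_exp)
  have gM[measurable]: "?g \<in> borel_measurable M" by (rule borel_measurable_cond_exp2)
  have ig: "integrable M ?g" using real_cond_exp_int(1)[OF assms(5)] .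
  define P where "P = {x\<in>space M. ?g x > 0}"
  define N where "N = {x\<in>space M. ?g x < 0}"
  have spF: "space ?F = space M" by (simp add: space_measure_of_conv)
  have "{x\<in>space ?F. 0 < ?g x} \<in> sets ?F" using gF unfolding borel_measurable_iff_greater by blast
  then have PF: "P \<in> B" unfolding P_def using sB spF by simp
  have "{x\<in>space ?F. ?g x < 0} \<in> sets ?F" using gF unfolding borel_measurable_iff_less by blast
  then have NF: "N \<in> B" unfolding N_def using sB spF by simp
  have PS: "P \<in> \<S>" "N \<in> \<S>" using PF NF assms(3) by auto
  have PM[measurable]: "P \<in> sets M" "N \<in> sets M" using PS assms(4) by auto
  have eqP: "set_lebesgue_integral M P f = set_lebesgue_integral M P ?g"
    by (rule real_cond_exp_intA[OF assms(5)]) (simp add: sB PF)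
  have eqN: "set_lebesgue_integral M N f = set_lebesgue_integral M N ?g"
    by (rule real_cond_exp_intA[OF assms(5)]) (simp add: sB NF)
  have i1: "integrable M (\<lambda>x. indicator S x * ?g x)"
    using integrable_mult_indicator[OF assms(6) ig] by simp
  have i2: "integrable M (\<lambda>x. indicator P x * ?g x)"
    using integrable_mult_indicator[OF PM(1) ig] by simp
  have i3: "integrable M (\<lambda>x. indicator N x * ?g x)"
    using integrable_mult_indicator[OF PM(2) ig] by simp
  have up: "set_lebesgue_integral M S ?g \<le> set_lebesgue_integral M P ?g"
    unfolding set_lebesgue_integral_def
    apply (rule integral_mono) using i1 i2 by (auto simp: P_def split: split_indicator)
  have lo: "set_lebesgue_integral M N ?g \<le> set_lebesgue_integral M S ?g"
    unfolding set_lebesgue_integral_def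
    apply (rule integral_mono) using i1 i3 by (auto simp: N_def split: split_indicator)
  have "\<bar>set_lebesgue_integral M P f\<bar> \<le> S_norm M \<S> f" "\<bar>set_lebesgue_integral M N f\<bar> \<le> S_norm M \<S> f"
    using Snorm_ge[OF assms(5,4)] PS by auto
  then show ?thesis using up lo eqP eqN by linarith
qed

lemma partc2:
  assumes "prob_space M" "sigma_algebra (space M) \<S>" "\<S> \<subseteq> sets M" "integrable M f"
  shows "L1_norm M (real_cond_exp M (sigma (space M) \<S>) f) \<le> 2 * S_norm M \<S> f"
proof -
  let ?F = "sigma (space M) \<S>"
  let ?g = "real_cond_exp M ?F f"
  interpret sigma_finite_subalgebra M ?F using sfs[OF assms(1,2,3)] by simp
  have sB: "sets ?F = \<S>" using sfs[OF assms(1,2,3)] by simp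
  have gF: "?g \<in> borel_measurable ?F" by (rule borel_measurable_cond_exp)
  have gM[measurable]: "?g \<in> borel_measurable M" by (rule borel_measurable_cond_exp2)
  have ig: "integrable M ?g" using real_cond_exp_int(1)[OF assms(4)] .
  define P where "P = {x\<in>space M. ?g x > 0}"
  define N where "N = {x\<in>space M. ?g x < 0}"
  have spF: "space ?F = space M" by (simp add: space_measure_of_conv)
  have "{x\<in>space ?F. 0 < ?g x} \<in> sets ?F" using gF unfolding borel_measurable_iff_greater by blast
  then have PF: "P \<in> \<S>" unfolding P_def using sB spF by simp
  have "{x\<in>space ?F. ?g x < 0} \<in> sets ?F" using gF unfolding borel_measurable_iff_less by blast
  then have NF: "N \<in> \<S>" unfolding N_def using sB spF by simp
  have PM[measurable]: "P \<in> sets M" "N \<in> sets M" using PF NF assms(3) by auto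
  have eqP: "set_lebesgue_integral M P f = set_lebesgue_integral M P ?g"
    by (rule real_cond_exp_intA[OF assms(4)]) (simp add: sB PF)
  have eqN: "set_lebesgue_integral M N f = set_lebesgue_integral M N ?g"
    by (rule real_cond_exp_intA[OF assms(4)]) (simp add: sB NF)
  have i2: "integrable M (\<lambda>x. indicator P x * ?g x)"
    using integrable_mult_indicator[OF PM(1) ig] by simp
  have i3: "integrable M (\<lambda>x. indicator N x * ?g x)"
    using integrable_mult_indicator[OF PM(2) ig] by simp
  have "(\<integral>x. \<bar>?g x\<bar> \<partial>M) = (\<integral>x. indicator P x * ?g x - indicator N x * ?g x \<partial>M)"
    by (rule Bochner_Integration.integral_cong[OF refl]) (auto simp: P_def N_def split: split_indicator)
  also have "\<dots> = set_lebesgue_integral M P ?g - set_lebesgue_integral M N ?g"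
    unfolding set_lebesgue_integral_def using i2 i3 by simp
  finally have e: "L1_norm M ?g = set_lebesgue_integral M P f - set_lebesgue_integral M N f"
    unfolding L1_norm_def using eqP eqN by simp
  have "\<bar>set_lebesgue_integral M P f\<bar> \<le> S_norm M \<S> f" "\<bar>set_lebesgue_integral M N f\<bar> \<le> S_norm M \<S> f"
    using Snorm_ge[OF assms(4,3)] PF NF by auto
  then show ?thesis using e by linarith
qed

theorem lemma2p5:
  fixes M :: "'a measure" and k :: nat and \<S> :: "'a set set" and f :: "'a \<Rightarrow> real"
  assumes "prob_space M"
    and "k \<ge> 1"
    and "k_semiring (space M) k \<S>"
    and "\<S> \<subseteq> sets M"
    and "integrable M f"
  shows "S_norm M \<S> f \<le> L1_norm M f
    \<and> (\<forall>\<B>. sigma_algebra (space M) \<B> \<and> \<B> \<subseteq> \<S> \<longrightarrow>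
          S_norm M \<S> (real_cond_exp M (sigma (space M) \<B>) f) \<le> S_norm M \<S> f)
    \<and> (sigma_algebra (space M) \<S> \<longrightarrow>
          S_norm M \<S> f \<le> L1_norm M (real_cond_exp M (sigma (space M) \<S>) f)
          \<and> L1_norm M (real_cond_exp M (sigma (space M) \<S>) f) \<le> 2 * S_norm M \<S> f)"
proof (intro conjI allI impI)
  have ne: "\<S> \<noteq> {}" using assms(3) unfolding k_semiring_def by auto
  show "S_norm M \<S> f \<le> L1_norm M f"
    using Snorm_le[OF ne] abs_setint_le[OF assms(5)] assms(4) by blast
  fix \<B> assume "sigma_algebra (space M) \<B> \<and> \<B> \<subseteq> \<S>"
  then show "S_norm M \<S> (real_cond_exp M (sigma (space M) \<B>) f) \<le> S_norm M \<S> f"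
    using Snorm_le[OF ne] partb[OF assms(1) _ _ assms(4,5)] assms(4) by blast
next
  have ne: "\<S> \<noteq> {}" using assms(3) unfolding k_semiring_def by auto
  assume sa: "sigma_algebra (space M) \<S>"
  show "L1_norm M (real_cond_exp M (sigma (space M) \<S>) f) \<le> 2 * S_norm M \<S> f"
    by (rule partc2[OF assms(1) sa assms(4,5)])
  show "S_norm M \<S> f \<le> L1_norm M (real_cond_exp M (sigma (space M) \<S>) f)"
  proof (rule Snorm_le[OF ne])
    fix S assume S: "S \<in> \<S>"
    interpret sigma_finite_subalgebra M "sigma (space M) \<S>" using sfs[OF assms(1) sa assms(4)] by simp
    have "set_lebesgue_integral M S f = set_lebesgue_integral M S (real_cond_exp M (sigma (space M) \<S>) f)"
      by (rule real_cond_exp_intA[OF assms(5)]) (simp add: sfs[OF assms(1) sa assms(4)] S)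
    then show "\<bar>set_lebesgue_integral M S f\<bar> \<le> L1_norm M (real_cond_exp M (sigma (space M) \<S>) f)"
      using abs_setint_le[OF real_cond_exp_int(1)[OF assms(5)]] S assms(4) by auto
  qed
qed

end
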